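(* Let $Y_1,Y_2,\ldots$ be i.i.d. Bernoulli$(1/2)$ and let $(Z^k)_k$ be generated by the bit-drop scheme described in the context, independently of $(Y_i)$. For $0\le k\le n$ let $L^a_n(k)$ be the length of a longest common subsequence of $Z^k$ and $Y_1\ldots Y_n$. Let $$E^n_4:=\bigcap_{k=\lceil 0.45n\rceil}^{n}\{L^a_n(k)\geq 0.65k\}.$$ Then $\lim_{n\to\infty}P(E^n_4)=1$.
   Context: Bit-drop scheme: let $V_1,V_2,\ldots$ be i.i.d. Bernoulli$(1/2)$ and let $T_3,T_4,\ldots$ be independent, independent of $(V_k)$, with $T_{k+1}$ uniform on $\{2,\ldots,k\}$. Set $Z^2:=V_1V_2$ and, given $Z^k=Z^k_1\ldots Z^k_k$, define $Z^{k+1}_j:=Z^k_j$ for $j<T_{k+1}$, $Z^{k+1}_{T_{k+1}}:=V_{k+1}$, $Z^{k+1}_j:=Z^k_{j-1}$ for $T_{k+1}<j\le k+1$. *)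

theory Defs
  imports "HOL-Probability.Probability" "HOL-Library.Sublist"
begin

text \<open>Bit-drop scheme. Indices are 1-based: V 1, V 2, ... and T 3, T 4, ...
  bitdrop V T k is the word Z^k (for k >= 2); the values for k = 0, 1 are
  irrelevant conventions.\<close>
fun bitdrop :: "(nat \<Rightarrow> 'b) \<Rightarrow> (nat \<Rightarrow> nat) \<Rightarrow> nat \<Rightarrow> 'b list" where
  "bitdrop V T 0 = []"
| "bitdrop V T (Suc 0) = [V 1]"
| "bitdrop V T (Suc (Suc 0)) = [V 1, V 2]"
| "bitdrop V T (Suc (Suc (Suc k))) =
     (let Z = bitdrop V T (Suc (Suc k)); t = T (Suc (Suc (Suc k)))
      in take (t - 1) Z @ [V (Suc (Suc (Suc k)))] @ drop (t - 1) Z)"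

definition lcs_len :: "'b list \<Rightarrow> 'b list \<Rightarrow> nat" where
  "lcs_len xs ys = Max {length w | w. subseq w xs \<and> subseq w ys}"

end

theory Submission
  imports Defs "HOL-Real_Asymp.Real_Asymp"
begin

lemma lcs_set_finite: "finite {length w | w. subseq w xs \<and> subseq w ys}"
proof -
  have "{length w | w. subseq w xs \<and> subseq w ys} \<subseteq> length ` set (List.subseqs xs)"
    by auto
  then show ?thesis by (rule finite_subset) auto
qed

lemma lcs_ge: "subseq w xs \<Longrightarrow> subseq w ys \<Longrightarrow> length w \<le> lcs_len xs ys"
  unfolding lcs_len_def by (rule Max_ge[OF lcs_set_finite]) auto

lemma lcs_wit: "\<exists>w. subseq w xs \<and> subseq w ys \<and> length w = lcs_len xs ys"
proof -
  have "lcs_len xs ys \<in> {length w | w. subseq w xs \<and> subseq w ys}"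
    unfolding lcs_len_def by (rule Max_in[OF lcs_set_finite]) (auto intro: exI[of _ "[]"])
  then show ?thesis by auto
qed

lemma lcs_le_length: "lcs_len xs ys \<le> length xs"
  using lcs_wit[of xs ys] list_emb_length by fastforce

lemma lcs_mono2: "subseq ys ys' \<Longrightarrow> lcs_len xs ys \<le> lcs_len xs ys'"
  using lcs_wit[of xs ys] by (metis lcs_ge subseq_order.order_trans)

lemma lcs_split: "lcs_len (take b xs) (take b ys) + lcs_len (drop b xs) (drop b ys) \<le> lcs_len xs ys"
proof -
  obtain w1 where w1: "subseq w1 (take b xs)" "subseq w1 (take b ys)" "length w1 = lcs_len (take b xs) (take b ys)"
    using lcs_wit by blast
  obtain w2 where w2: "subseq w2 (drop b xs)" "subseq w2 (drop b ys)" "length w2 = lcs_len (drop b xs) (drop b ys)"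
    using lcs_wit by blast
  have "subseq (w1 @ w2) xs" using list_emb_append_mono[OF w1(1) w2(1)] by simp
  moreover have "subseq (w1 @ w2) ys" using list_emb_append_mono[OF w1(2) w2(2)] by simp
  ultimately show ?thesis using lcs_ge w1(3) w2(3) by fastforce
qed

lemma lcs_blocks:
  "(\<Sum>i<m. lcs_len (take b (drop (b*i) xs)) (take b (drop (b*i) ys))) \<le> lcs_len xs ys"
proof (induction m arbitrary: xs ys)
  case 0 then show ?case by simp
next
  case (Suc m)
  have "(\<Sum>i<Suc m. lcs_len (take b (drop (b*i) xs)) (take b (drop (b*i) ys)))
     = lcs_len (take b xs) (take b ys) + (\<Sum>i<m. lcs_len (take b (drop (b*i) (drop b xs))) (take b (drop (b*i) (drop b ys))))"
    by (subst sum.lessThan_Suc_shift) (simp add: add.commute)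
  also have "\<dots> \<le> lcs_len (take b xs) (take b ys) + lcs_len (drop b xs) (drop b ys)"
    using Suc.IH[of "drop b xs" "drop b ys"] by (simp add: add.commute)
  also have "\<dots> \<le> lcs_len xs ys" by (rule lcs_split)
  finally show ?case .
qed

lemma bitdrop_map: "bitdrop V T k = map V (bitdrop id T k)"
  by (induction V T k rule: bitdrop.induct) (simp_all add: Let_def take_map drop_map)

lemma bitdrop_props: "distinct (bitdrop id T k) \<and> set (bitdrop id T k) = {1..k}"
proof (induction "id::nat\<Rightarrow>nat" T k rule: bitdrop.induct)
  case (4 T k)
  let ?Z = "bitdrop id T (Suc (Suc k))"
  let ?t = "T (Suc (Suc (Suc k))) - 1"
  have e: "set (take ?t ?Z) \<union> set (drop ?t ?Z) = set ?Z"
    by (metis set_append append_take_drop_id)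
  have d: "distinct (take ?t ?Z @ drop ?t ?Z)" using 4 by simp
  have "Suc (Suc (Suc k)) \<notin> set ?Z" using 4 by simp
  then have "Suc (Suc (Suc k)) \<notin> set (take ?t ?Z)" "Suc (Suc (Suc k)) \<notin> set (drop ?t ?Z)"
    using e by auto
  moreover have "set (take ?t ?Z) \<inter> set (drop ?t ?Z) = {}" using d by (simp only: distinct_append)
  ultimately have "distinct (take ?t ?Z @ [Suc (Suc (Suc k))] @ drop ?t ?Z)"
    using d by auto
  moreover have "set (take ?t ?Z @ [Suc (Suc (Suc k))] @ drop ?t ?Z) = {1..Suc (Suc (Suc k))}"
    using e 4 by auto
  ultimately show ?case by (simp add: Let_def)
qed auto

lemma bitdrop_cong: "(\<And>j. 3 \<le> j \<Longrightarrow> j \<le> k \<Longrightarrow> T j = T' j) \<Longrightarrow> bitdrop V T k = bitdrop V T' k"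
proof (induction V T k rule: bitdrop.induct)
  case (4 V T k)
  then show ?case by (simp add: Let_def)
qed auto

lemma block_disj:
  assumes "distinct q" "i \<noteq> i'"
  shows "set (take b (drop (b*i) q)) \<inter> set (take b (drop (b*i') q)) = {}"
proof (rule ccontr)
  assume "\<not> ?thesis"
  then obtain x where x1: "x \<in> set (take b (drop (b*i) q))" and x2: "x \<in> set (take b (drop (b*i') q))" by blast
  from x1 obtain p where p: "p < length (take b (drop (b*i) q))" "take b (drop (b*i) q) ! p = x"
    by (auto simp: in_set_conv_nth)
  from x2 obtain p' where p': "p' < length (take b (drop (b*i') q))" "take b (drop (b*i') q) ! p' = x"
    by (auto simp: in_set_conv_nth)
  have a: "q ! (b*i + p) = x" "b*i+p < length q" "p < b" using p by auto
  have a': "q ! (b*i' + p') = x" "b*i'+p' < length q" "p' < b" using p' by auto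
  have "b*i + p = b*i' + p'" using a a' assms(1) nth_eq_iff_index_eq by metis
  moreover have "b * i + p \<noteq> b*i' + p'"
  proof (cases "i < i'")
    case True
    then have "b*i + b \<le> b * i'" by (metis add.commute less_imp_Suc_add mult_Suc_right mult_le_mono2 le_add1 add_le_mono1 nat_mult_le_cancel_disj)
    then show ?thesis using a(3) by linarith
  next
    case False
    then have "i' < i" using assms(2) by simp
    then have "b*i' + b \<le> b * i" by (metis add.commute less_imp_Suc_add mult_Suc_right mult_le_mono2 le_add1 add_le_mono1 nat_mult_le_cancel_disj)
    then show ?thesis using a'(3) by linarith
  qed
  ultimately show False by simp
qed

fun lcsc :: "nat list \<Rightarrow> nat list \<Rightarrow> nat" where
  "lcsc [] ys = 0"
| "lcsc (x#xs) [] = 0"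
| "lcsc (x#xs) (y#ys) = (if x = y then Suc (lcsc xs ys) else max (lcsc xs (y#ys)) (lcsc (x#xs) ys))"

lemma lcsc_wit: "\<exists>w. subseq w xs \<and> subseq w ys \<and> length w = lcsc xs ys"
proof (induction xs ys rule: lcsc.induct)
  case (3 x xs y ys)
  show ?case
  proof (cases "x = y")
    case True
    obtain w where "subseq w xs" "subseq w ys" "length w = lcsc xs ys" using "3.IH"(1)[OF True] by blast
    with True show ?thesis by (intro exI[of _ "x#w"]) auto
  next
    case False
    show ?thesis
    proof (cases "lcsc xs (y#ys) \<le> lcsc (x#xs) ys")
      case True
      obtain w where "subseq w (x#xs)" "subseq w ys" "length w = lcsc (x#xs) ys" using "3.IH"(3)[OF False] by blast
      with True False show ?thesis by (intro exI[of _ w]) auto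
    next
      case c: False
      obtain w where "subseq w xs" "subseq w (y#ys)" "length w = lcsc xs (y#ys)" using "3.IH"(2)[OF False] by blast
      with c False show ?thesis by (intro exI[of _ w]) auto
    qed
  qed
qed auto

lemma lcsc_le: "lcsc xs ys \<le> lcs_len xs ys"
  using lcsc_wit[of xs ys] lcs_ge by metis

fun Rrow :: "nat list \<Rightarrow> nat list \<Rightarrow> nat list" where
  "Rrow [] ys = [0]"
| "Rrow (x#xs) ys = lcsc (x#xs) ys # Rrow xs ys"

lemma hd_Rrow: "hd (Rrow xs ys) = lcsc xs ys"
  by (cases xs) auto

fun stp :: "nat list \<Rightarrow> nat \<Rightarrow> nat list \<Rightarrow> nat list" where
  "stp [] y r = [0]"
| "stp (x#xs) y r = (let rest = stp xs y (tl r) in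
      (if x = y then Suc (hd (tl r)) else max (hd rest) (hd r)) # rest)"

lemma stp_Rrow: "stp xs y (Rrow xs ys) = Rrow xs (y#ys)"
proof (induction xs)
  case (Cons x xs)
  show ?case
    by (simp add: Cons Let_def hd_Rrow)
qed simp

fun tsum :: "nat list \<Rightarrow> nat list \<Rightarrow> nat \<Rightarrow> nat" where
  "tsum xs r 0 = hd r"
| "tsum xs r (Suc n) = tsum xs (stp xs 0 r) n + tsum xs (stp xs 1 r) n"

fun allb :: "nat \<Rightarrow> nat list list" where
  "allb 0 = [[]]"
| "allb (Suc n) = map (\<lambda>ys. ys @ [0]) (allb n) @ map (\<lambda>ys. ys @ [1]) (allb n)"

lemma tsum_eq: "tsum xs (Rrow xs ys0) n = sum_list (map (\<lambda>ys. lcsc xs (ys @ ys0)) (allb n))"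
  by (induction n arbitrary: ys0) (simp_all add: stp_Rrow hd_Rrow comp_def)

lemma comp6: "sum_list (map (\<lambda>xs. tsum xs (replicate (length xs + 1) 0) 6) (allb 6)) = 16302"
  by code_simp

lemma measurable_map_list:
  assumes "\<And>j. j \<in> set js \<Longrightarrow> (\<lambda>\<omega>. X j \<omega>) \<in> measurable N (count_space UNIV)"
  shows "(\<lambda>\<omega>. map (\<lambda>j. X j \<omega> :: nat) js) \<in> measurable N (count_space UNIV)"
  using assms
proof (induction js)
  case Nil then show ?case by simp
next
  case (Cons j js)
  have c: "(\<lambda>p. fst p # snd p :: nat list) \<in> measurable (count_space UNIV \<Otimes>\<^sub>M count_space UNIV) (count_space UNIV)"
    by (simp add: pair_measure_countable)
  have "(\<lambda>\<omega>. (X j \<omega>, map (\<lambda>j. X j \<omega>) js)) \<in> measurable N (count_space UNIV \<Otimes>\<^sub>M count_space UNIV)"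
    using Cons by (intro measurable_Pair) auto
  from measurable_compose[OF this c] show ?case by simp
qed

lemma sets_count_pred:
  assumes "f \<in> measurable M (count_space UNIV)"
  shows "{\<omega> \<in> space M. P (f \<omega>)} \<in> sets M"
proof -
  have "f -` {x. P x} \<inter> space M \<in> sets M" by (rule measurable_sets[OF assms]) simp
  moreover have "f -` {x. P x} \<inter> space M = {\<omega> \<in> space M. P (f \<omega>)}" by auto
  ultimately show ?thesis by simp
qed

context prob_space
begin

lemma indep_vars_lists:
  fixes X :: "'i \<Rightarrow> 'a \<Rightarrow> nat"
  assumes ind: "indep_vars (\<lambda>_. count_space UNIV) X I"
    and sub: "\<And>l. l \<in> L \<Longrightarrow> set (js l) \<subseteq> I"
    and disj: "disjoint_family_on (\<lambda>l. set (js l)) L"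
  shows "indep_vars (\<lambda>_. count_space UNIV) (\<lambda>l \<omega>. map (\<lambda>j. X j \<omega> :: nat) (js l)) L"
proof -
  have "indep_vars (\<lambda>l. PiM (set (js l)) (\<lambda>_. count_space UNIV)) (\<lambda>l \<omega>. restrict (\<lambda>i. X i \<omega>) (set (js l))) L"
    by (rule indep_vars_restrict[OF ind sub disj])
  then have "indep_vars (\<lambda>_. count_space UNIV) (\<lambda>l \<omega>. (\<lambda>f. map f (js l)) (restrict (\<lambda>i. X i \<omega>) (set (js l)))) L"
  proof (rule indep_vars_compose2)
    fix l assume "l \<in> L"
    show "(\<lambda>f::'i\<Rightarrow>nat. map f (js l)) \<in> measurable (PiM (set (js l)) (\<lambda>_. count_space UNIV)) (count_space UNIV)"
      by (rule measurable_map_list[where X="\<lambda>j f. f j", simplified])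
         (auto intro: measurable_component_singleton)

  qed
  moreover have "(\<lambda>l \<omega>. (\<lambda>f. map f (js l)) (restrict (\<lambda>i. X i \<omega>) (set (js l)))) = (\<lambda>l \<omega>. map (\<lambda>j. X j \<omega>) (js l))"
    by (intro ext map_cong) auto
  ultimately show ?thesis by simp
qed

lemma prob_map_eq:
  assumes ind: "indep_vars (\<lambda>_. count_space UNIV) X I"
    and sub: "set js \<subseteq> I" and dist: "distinct js" and len: "length l = length js"
  shows "prob {\<omega> \<in> space M. map (\<lambda>j. X j \<omega> :: nat) js = l} = (\<Prod>i<length js. prob {\<omega> \<in> space M. X (js!i) \<omega> = l!i})"
proof (cases "js = []")
  case True
  then show ?thesis using len by (simp add: prob_space)
next
  case False
  define ix where "ix = inv_into {..<length js} ((!) js)"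
  have bij: "bij_betw ((!) js) {..<length js} (set js)" by (rule bij_betw_nth[OF dist]) auto
  have ixn: "ix (js ! i) = i" if "i < length js" for i
    unfolding ix_def using bij that by (simp add: bij_betw_def inv_into_f_f)
  define A where "A j = {\<omega> \<in> space M. X j \<omega> = l ! ix j}" for j
  have rv: "X j \<in> measurable M (count_space UNIV)" if "j \<in> I" for j
    using ind that unfolding indep_vars_def2 by auto
  have eq: "{\<omega> \<in> space M. map (\<lambda>j. X j \<omega>) js = l} = (\<Inter>j\<in>set js. A j)"
  proof -
    have "map (\<lambda>j. X j \<omega>) js = l \<longleftrightarrow> (\<forall>i<length js. X (js!i) \<omega> = l!i)" for \<omega>
      using len by (auto simp: list_eq_iff_nth_eq)
    moreover have "(\<forall>i<length js. X (js!i) \<omega> = l!i) \<longleftrightarrow> (\<forall>j\<in>set js. X j \<omega> = l ! ix j)" for \<omega>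
      by (metis in_set_conv_nth ixn)
    moreover obtain j0 where "j0 \<in> set js" using False by (cases js) auto
    ultimately show ?thesis unfolding A_def by auto
  qed
  have "prob (\<Inter>j\<in>set js. A j) = (\<Prod>j\<in>set js. prob (A j))"
  proof (rule indep_setsD)
    show "indep_sets (\<lambda>i. {X i -` B \<inter> space M | B. B \<in> sets (count_space UNIV)}) I"
      using ind unfolding indep_vars_def2 by auto
    show "\<forall>j\<in>set js. A j \<in> {X j -` B \<inter> space M | B. B \<in> sets (count_space UNIV)}"
      unfolding A_def by (auto intro!: exI[of _ "{l ! ix j}" for j])
  qed (use sub False in auto)
  also have "\<dots> = (\<Prod>i<length js. prob (A (js ! i)))"
    using prod.reindex_bij_betw[OF bij, of "\<lambda>j. prob (A j)"] by simp
  also have "\<dots> = (\<Prod>i<length js. prob {\<omega> \<in> space M. X (js!i) \<omega> = l!i})"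
    by (intro prod.cong) (auto simp: A_def ixn)
  finally show ?thesis using eq by simp
qed

end

definition bitl :: "nat \<Rightarrow> nat list set" where
  "bitl n = {l. set l \<subseteq> {0,1} \<and> length l = n}"

lemma finite_bitl: "finite (bitl n)"
  unfolding bitl_def by (rule finite_lists_length_eq) simp

context prob_space
begin

lemma expect_bits:
  fixes X :: "'i \<Rightarrow> 'a \<Rightarrow> nat" and h :: "nat list \<Rightarrow> real"
  assumes ind: "indep_vars (\<lambda>_. count_space UNIV) X I"
    and sub: "set js \<subseteq> I" and dist: "distinct js"
    and half: "\<And>j b. j \<in> set js \<Longrightarrow> b \<in> {0,1} \<Longrightarrow> prob {\<omega> \<in> space M. X j \<omega> = b} = 1/2"
  shows "expectation (\<lambda>\<omega>. h (map (\<lambda>j. X j \<omega>) js)) = (\<Sum>l\<in>bitl (length js). h l) / 2 ^ length js"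
proof -
  define W where "W \<omega> = map (\<lambda>j. X j \<omega>) js" for \<omega>
  define F where "F = bitl (length js)"
  have rv: "X j \<in> measurable M (count_space UNIV)" if "j \<in> I" for j
    using ind that unfolding indep_vars_def2 by auto
  have Wm: "W \<in> measurable M (count_space UNIV)"
    unfolding W_def by (rule measurable_map_list) (use rv sub in auto)
  have finF: "finite F" unfolding F_def by (rule finite_bitl)
  have pl: "prob {\<omega> \<in> space M. W \<omega> = l} = 1 / 2 ^ length js" if "l \<in> F" for l
  proof -
    have len: "length l = length js" and bits: "set l \<subseteq> {0,1}" using that by (auto simp: F_def bitl_def)
    have "prob {\<omega> \<in> space M. W \<omega> = l} = (\<Prod>i<length js. prob {\<omega> \<in> space M. X (js!i) \<omega> = l!i})"
      unfolding W_def by (rule prob_map_eq[OF ind sub dist len])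
    also have "\<dots> = (\<Prod>i<length js. 1/2)"
    proof (intro prod.cong refl)
      fix i assume "i \<in> {..<length js}"
      then have i: "i < length js" by simp
      have "js ! i \<in> set js" using i by simp
      moreover have "l ! i \<in> set l" using i len by simp
      then have "l ! i \<in> {0,1}" using bits by blast
      ultimately show "prob {\<omega> \<in> space M. X (js!i) \<omega> = l!i} = 1/2" by (rule half)
    qed
    finally show ?thesis by (simp add: power_one_over)
  qed
  have ev: "{\<omega> \<in> space M. P (X j \<omega>)} \<in> events" if "j \<in> I" for j P
    by (rule sets_count_pred[OF rv[OF that]])
  have AEj: "AE \<omega> in M. X j \<omega> \<in> {0,1}" if "j \<in> set js" for j
  proof -
    have jI: "j \<in> I" using that sub by auto
    have seteq: "{\<omega> \<in> space M. X j \<omega> \<in> {0,1}} = {\<omega> \<in> space M. X j \<omega> = 0} \<union> {\<omega> \<in> space M. X j \<omega> = 1}" by auto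
    have "prob ({\<omega> \<in> space M. X j \<omega> = 0} \<union> {\<omega> \<in> space M. X j \<omega> = 1}) =
          prob {\<omega> \<in> space M. X j \<omega> = 0} + prob {\<omega> \<in> space M. X j \<omega> = 1}"
      by (rule measure_Union) (auto intro: ev[OF jI])
    also have "\<dots> = 1" using half[OF that, of 0] half[OF that, of 1] by simp
    finally have p1: "prob {\<omega> \<in> space M. X j \<omega> \<in> {0,1}} = 1"
      by (simp only: seteq)
    have e: "{\<omega> \<in> space M. X j \<omega> \<in> {0,1}} \<in> events" by (rule ev[OF jI])
    have "AE \<omega> in M. \<omega> \<in> {\<omega> \<in> space M. X j \<omega> \<in> {0,1}}"
      using AE_in_set_eq_1[OF e] p1 by blast
    then show ?thesis by (rule eventually_mono) auto
  qed
  have AE: "AE \<omega> in M. W \<omega> \<in> F"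
  proof -
    have "AE \<omega> in M. \<forall>j\<in>set js. X j \<omega> \<in> {0,1}"
      by (rule eventually_ball_finite) (use AEj in auto)
    then show ?thesis
      by eventually_elim (auto simp: W_def F_def bitl_def)
  qed
  have "expectation (\<lambda>\<omega>. h (W \<omega>)) = expectation (\<lambda>\<omega>. \<Sum>l\<in>F. h l * indicator {\<omega> \<in> space M. W \<omega> = l} \<omega>)"
  proof (rule integral_cong_AE)
    show "(\<lambda>\<omega>. h (W \<omega>)) \<in> borel_measurable M"
      using measurable_compose[OF Wm, of h borel] by simp
    show "(\<lambda>\<omega>. \<Sum>l\<in>F. h l * indicator {\<omega> \<in> space M. W \<omega> = l} \<omega>) \<in> borel_measurable M"
      using sets_count_pred[OF Wm] by (intro borel_measurable_sum borel_measurable_times borel_measurable_const borel_measurable_indicator) auto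
    show "AE \<omega> in M. h (W \<omega>) = (\<Sum>l\<in>F. h l * indicator {\<omega> \<in> space M. W \<omega> = l} \<omega>)"
      using AE
    proof (rule AE_mp[OF _ AE_I2])
      fix \<omega> assume \<omega>: "\<omega> \<in> space M"
      show "W \<omega> \<in> F \<longrightarrow> h (W \<omega>) = (\<Sum>l\<in>F. h l * indicator {\<omega> \<in> space M. W \<omega> = l} \<omega>)"
      proof
        assume "W \<omega> \<in> F"
        have "(\<Sum>l\<in>F. h l * indicator {\<omega> \<in> space M. W \<omega> = l} \<omega>) = (\<Sum>l\<in>F. if l = W \<omega> then h l else 0)"
          by (intro sum.cong refl) (auto simp: indicator_def \<omega>)
        also have "\<dots> = h (W \<omega>)" using \<open>W \<omega> \<in> F\<close> finF by simp
        finally show "h (W \<omega>) = (\<Sum>l\<in>F. h l * indicator {\<omega> \<in> space M. W \<omega> = l} \<omega>)" by simp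
      qed
    qed
  qed
  also have "\<dots> = (\<Sum>l\<in>F. expectation (\<lambda>\<omega>. h l * indicator {\<omega> \<in> space M. W \<omega> = l} \<omega>))"
    by (rule Bochner_Integration.integral_sum) (auto intro!: integrable_mult_right integrable_real_indicator sets_count_pred[OF Wm] simp: less_top[symmetric])
  also have "\<dots> = (\<Sum>l\<in>F. h l * prob {\<omega> \<in> space M. W \<omega> = l})"
  proof (intro sum.cong refl)
    fix l
    have "{\<omega> \<in> space M. W \<omega> = l} \<inter> space M = {\<omega> \<in> space M. W \<omega> = l}" by auto
    then show "expectation (\<lambda>\<omega>. h l * indicator {\<omega> \<in> space M. W \<omega> = l} \<omega>) = h l * prob {\<omega> \<in> space M. W \<omega> = l}"
      by simp
  qed
  also have "\<dots> = (\<Sum>l\<in>F. h l / 2 ^ length js)"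
    by (intro sum.cong refl) (simp add: pl)
  finally show ?thesis unfolding W_def F_def by (simp add: sum_divide_distrib)
qed

end

lemma set_allb: "set (allb n) = bitl n"
proof (induction n)
  case 0 then show ?case by (auto simp: bitl_def)
next
  case (Suc n)
  show ?case
  proof (intro equalityI subsetI)
    fix l assume "l \<in> set (allb (Suc n))"
    then show "l \<in> bitl (Suc n)" using Suc by (auto simp: bitl_def)
  next
    fix l assume l: "l \<in> bitl (Suc n)"
    then have "l \<noteq> []" by (auto simp: bitl_def)
    then have e: "l = butlast l @ [last l]" by simp
    have "last l \<in> set l" using \<open>l \<noteq> []\<close> by simp
    then have "last l \<in> {0,1}" using l by (auto simp: bitl_def)
    moreover have "butlast l \<in> bitl n" using l by (auto simp: bitl_def dest: in_set_butlastD)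
    ultimately show "l \<in> set (allb (Suc n))" using Suc e
      by (auto intro: image_eqI[of _ _ "butlast l"])
  qed
qed

lemma distinct_allb: "distinct (allb n)"
proof (induction n)
  case (Suc n)
  have "inj_on (\<lambda>ys. ys @ [0::nat]) (set (allb n))" "inj_on (\<lambda>ys. ys @ [1::nat]) (set (allb n))"
    by (auto intro: inj_onI)
  then show ?case using Suc by (auto simp: distinct_map)
qed simp

lemma lcsc_Nil2: "lcsc xs [] = 0"
  by (cases xs) auto

lemma Rrow_Nil: "Rrow xs [] = replicate (length xs + 1) 0"
  by (induction xs) (auto simp: lcsc_Nil2)

lemma comp_bound: "16302 \<le> (\<Sum>l\<in>bitl 12. real (lcs_len (take 6 l) (drop 6 l)))"
proof -
  have inj: "inj_on (\<lambda>(a,b). a @ b) (bitl 6 \<times> bitl (6::nat))"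
    by (auto intro!: inj_onI simp: bitl_def)
  have img: "bitl 12 = (\<lambda>(a,b). a @ b) ` (bitl 6 \<times> bitl 6)"
  proof (intro equalityI subsetI)
    fix l assume l: "l \<in> bitl 12"
    then have "take 6 l \<in> bitl 6" "drop 6 l \<in> bitl 6"
      by (auto simp: bitl_def dest: in_set_takeD in_set_dropD)
    then show "l \<in> (\<lambda>(a,b). a @ b) ` (bitl 6 \<times> bitl 6)"
      by (intro image_eqI[of _ _ "(take 6 l, drop 6 l)"]) auto
  qed (auto simp: bitl_def)
  have "(\<Sum>l\<in>bitl 12. lcsc (take 6 l) (drop 6 l)) = (\<Sum>(a,b)\<in>bitl 6 \<times> bitl 6. lcsc a b)"
    unfolding img by (subst sum.reindex[OF inj]) (auto intro!: sum.cong simp: bitl_def)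
  also have "\<dots> = (\<Sum>a\<in>bitl 6. \<Sum>b\<in>bitl 6. lcsc a b)"
    by (rule sum.cartesian_product[symmetric])
  also have "\<dots> = sum_list (map (\<lambda>a. sum_list (map (\<lambda>b. lcsc a b) (allb 6))) (allb 6))"
    by (simp add: set_allb[symmetric] sum_list_distinct_conv_sum_set distinct_allb)
  also have "\<dots> = sum_list (map (\<lambda>xs. tsum xs (replicate (length xs + 1) 0) 6) (allb 6))"
    using tsum_eq[of _ "[]" 6] by (simp add: Rrow_Nil)
  also have "\<dots> = 16302" by (rule comp6)
  finally have "(\<Sum>l\<in>bitl 12. lcsc (take 6 l) (drop 6 l)) = 16302" .
  then have "16302 = (\<Sum>l\<in>bitl 12. real (lcsc (take 6 l) (drop 6 l)))"
    by (metis of_nat_sum of_nat_numeral)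
  also have "\<dots> \<le> (\<Sum>l\<in>bitl 12. real (lcs_len (take 6 l) (drop 6 l)))"
    by (intro sum_mono) (simp add: lcsc_le)
  finally show ?thesis .
qed

lemma len_blk: "6*i + 6 \<le> length q \<Longrightarrow> length (take 6 (drop (6*i) q)) = 6"
  by simp

context prob_space
begin

lemma lcs_hoeffding:
  fixes X :: "'i \<Rightarrow> 'a \<Rightarrow> nat"
  assumes ind: "indep_vars (\<lambda>_. count_space UNIV) X I"
    and ps: "distinct ps" "set ps \<subseteq> I" "length ps = k"
    and qs: "distinct qs" "set qs \<subseteq> I" "length qs = k"
    and disj: "set ps \<inter> set qs = {}"
    and half: "\<And>j b. j \<in> set ps \<union> set qs \<Longrightarrow> b \<in> {0,1} \<Longrightarrow> prob {\<omega> \<in> space M. X j \<omega> = b} = 1/2"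
    and k: "k \<ge> 400"
  shows "prob {\<omega> \<in> space M. real (lcs_len (map (\<lambda>j. X j \<omega>) ps) (map (\<lambda>j. X j \<omega>) qs)) < 0.65 * real k}
           \<le> exp (- real k / 120000)"
proof -
  define m where "m = k div 6"
  define bp where "bp i = take 6 (drop (6*i) ps)" for i
  define bq where "bq i = take 6 (drop (6*i) qs)" for i
  define js where "js i = bp i @ bq i" for i
  define g where "g (l::nat list) = real (lcs_len (take 6 l) (drop 6 l))" for l
  define Xb where "Xb i \<omega> = g (map (\<lambda>j. X j \<omega>) (js i))" for i \<omega>
  have m6: "6 * m \<le> k" "k < 6 * m + 6" unfolding m_def by auto
  have mpos: "m > 0" using k unfolding m_def by auto
  have lenbp: "length (bp i) = 6" if "i < m" for i
  proof -
    have "6 * i + 6 \<le> 6 * m" using that by simp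
    then show ?thesis unfolding bp_def using m6 ps(3) by simp
  qed
  have lenbq: "length (bq i) = 6" if "i < m" for i
  proof -
    have "6 * i + 6 \<le> 6 * m" using that by simp
    then show ?thesis unfolding bq_def using m6 qs(3) by simp
  qed
  have Xb_eq: "Xb i \<omega> = real (lcs_len (map (\<lambda>j. X j \<omega>) (bp i)) (map (\<lambda>j. X j \<omega>) (bq i)))" if "i < m" for i \<omega>
    using lenbp[OF that] unfolding Xb_def g_def js_def by simp
  have setbp: "set (bp i) \<subseteq> set ps" for i unfolding bp_def
    by (meson order_trans set_drop_subset set_take_subset)
  have setbq: "set (bq i) \<subseteq> set qs" for i unfolding bq_def
    by (meson order_trans set_drop_subset set_take_subset)
  have distjs: "distinct (js i)" for i
  proof -
    have "distinct (bp i)" "distinct (bq i)" unfolding bp_def bq_def using ps(1) qs(1) by auto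
    moreover have "set (bp i) \<inter> set (bq i) = {}" using setbp setbq disj by blast
    ultimately show ?thesis unfolding js_def by simp
  qed
  have subjs: "set (js i) \<subseteq> I" for i using setbp[of i] setbq[of i] ps(2) qs(2) unfolding js_def by auto
  have disjfam: "disjoint_family_on (\<lambda>i. set (js i)) {..<m}"
  proof (unfold disjoint_family_on_def, intro ballI impI)
    fix i i' assume "i \<in> {..<m}" "i' \<in> {..<m}" "i \<noteq> i'"
    then have "set (bp i) \<inter> set (bp i') = {}" "set (bq i) \<inter> set (bq i') = {}"
      unfolding bp_def bq_def using block_disj[OF ps(1), of i i' 6] block_disj[OF qs(1), of i i' 6] by auto
    moreover have "set (bp i) \<inter> set (bq i') = {}" "set (bq i) \<inter> set (bp i') = {}"
      using setbp setbq disj by blast+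
    ultimately show "set (js i) \<inter> set (js i') = {}" unfolding js_def by auto
  qed
  have indb: "indep_vars (\<lambda>_. borel) Xb {..<m}"
  proof -
    have "indep_vars (\<lambda>_. count_space UNIV) (\<lambda>i \<omega>. map (\<lambda>j. X j \<omega>) (js i)) {..<m}"
      by (rule indep_vars_lists[OF ind _ disjfam]) (use subjs in auto)
    then have "indep_vars (\<lambda>_. borel) (\<lambda>i \<omega>. g (map (\<lambda>j. X j \<omega>) (js i))) {..<m}"
      by (rule indep_vars_compose2) simp
    then show ?thesis unfolding Xb_def .
  qed
  have EXb: "expectation (Xb i) \<ge> 16302 / 4096" if "i < m" for i
  proof -
    have lenjs: "length (js i) = 12" using lenbp[OF that] lenbq[OF that] unfolding js_def by simp
    have "expectation (Xb i) = (\<Sum>l\<in>bitl (length (js i)). g l) / 2 ^ length (js i)"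
      unfolding Xb_def
    proof (rule expect_bits[OF ind subjs distjs])
      fix j b assume "j \<in> set (js i)" "b \<in> {0::nat,1}"
      moreover have "j \<in> set ps \<union> set qs" using \<open>j \<in> set (js i)\<close> setbp[of i] setbq[of i] unfolding js_def by auto
      ultimately show "prob {\<omega> \<in> space M. X j \<omega> = b} = 1/2"
        using half by blast
    qed
    also have "\<dots> = (\<Sum>l\<in>bitl 12. g l) / 4096" using lenjs by simp
    finally show ?thesis using comp_bound unfolding g_def by simp
  qed
  define \<mu> where "\<mu> = (\<Sum>i<m. expectation (Xb i))"
  interpret H: Hoeffding_ineq M "{..<m}" Xb "\<lambda>_. 0" "\<lambda>_. 6" \<mu>
  proof unfold_locales
    show "finite {..<m}" by simp
    show "indep_vars (\<lambda>_. borel) Xb {..<m}" by (rule indb)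
  next
    fix i assume i: "i \<in> {..<m}"
    show "AE x in M. Xb i x \<in> {0..6}"
    proof (rule AE_I2)
      fix x
      have "lcs_len (map (\<lambda>j. X j x) (bp i)) (map (\<lambda>j. X j x) (bq i)) \<le> 6"
        using lcs_le_length[of "map (\<lambda>j. X j x) (bp i)"] lenbp i by simp
      then show "Xb i x \<in> {0..6}" using Xb_eq i by simp
    qed
  qed (simp add: \<mu>_def)
  have mu_ge: "\<mu> \<ge> real m * (16302 / 4096)"
  proof -
    have "real m * (16302 / 4096) = (\<Sum>i<m. 16302 / 4096)" by simp
    also have "\<dots> \<le> \<mu>" unfolding \<mu>_def by (intro sum_mono EXb) simp
    finally show ?thesis .
  qed
  define \<epsilon> where "\<epsilon> = \<mu> - 0.65 * real k"
  have mr: "6 * real m \<le> real k" "real k \<le> 6 * real m + 5" using m6 by linarith+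
  have k4: "real k \<ge> 400" using k by simp
  have c: "(0.65::real) * real k = 13/20 * real k" by simp
  have eps: "\<epsilon> \<ge> real k / 200" unfolding \<epsilon>_def c using mu_ge mr k4 by linarith
  have sub: "{\<omega> \<in> space M. real (lcs_len (map (\<lambda>j. X j \<omega>) ps) (map (\<lambda>j. X j \<omega>) qs)) < 0.65 * real k}
        \<subseteq> {\<omega> \<in> space M. (\<Sum>i\<in>{..<m}. Xb i \<omega>) \<le> \<mu> - \<epsilon>}"
  proof safe
    fix \<omega> assume \<omega>: "\<omega> \<in> space M" and lt: "real (lcs_len (map (\<lambda>j. X j \<omega>) ps) (map (\<lambda>j. X j \<omega>) qs)) < 0.65 * real k"
    have "(\<Sum>i\<in>{..<m}. Xb i \<omega>) = real (\<Sum>i<m. lcs_len (take 6 (drop (6*i) (map (\<lambda>j. X j \<omega>) ps))) (take 6 (drop (6*i) (map (\<lambda>j. X j \<omega>) qs))))"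
      by (simp add: Xb_eq bp_def bq_def take_map drop_map)
    also have "\<dots> \<le> real (lcs_len (map (\<lambda>j. X j \<omega>) ps) (map (\<lambda>j. X j \<omega>) qs))"
    proof -
      have "(\<Sum>i<m. lcs_len (take 6 (drop (6*i) (map (\<lambda>j. X j \<omega>) ps))) (take 6 (drop (6*i) (map (\<lambda>j. X j \<omega>) qs))))
            \<le> lcs_len (map (\<lambda>j. X j \<omega>) ps) (map (\<lambda>j. X j \<omega>) qs)"
        by (rule lcs_blocks)
      then show ?thesis by (simp only: of_nat_le_iff)
    qed
    finally show "(\<Sum>i\<in>{..<m}. Xb i \<omega>) \<le> \<mu> - \<epsilon>" using lt unfolding \<epsilon>_def by simp
  qed
  have "prob {\<omega> \<in> space M. real (lcs_len (map (\<lambda>j. X j \<omega>) ps) (map (\<lambda>j. X j \<omega>) qs)) < 0.65 * real k}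
        \<le> prob {\<omega> \<in> space M. (\<Sum>i\<in>{..<m}. Xb i \<omega>) \<le> \<mu> - \<epsilon>}"
    by (rule finite_measure_mono[OF sub]) measurable
  also have "\<dots> \<le> exp (- 2 * \<epsilon>\<^sup>2 / (\<Sum>i\<in>{..<m}. (6 - 0)\<^sup>2))"
    by (rule H.Hoeffding_ineq_le) (use eps mpos in auto)
  also have "\<dots> \<le> exp (- real k / 120000)"
  proof -
    have s: "(\<Sum>i\<in>{..<m}. (6 - 0::real)\<^sup>2) = 36 * real m" by simp
    have kpos: "real k > 0" using k by simp
    have e2: "\<epsilon>\<^sup>2 \<ge> (real k / 200)\<^sup>2" using eps kpos by (intro power_mono) auto
    have "real k / 120000 = 2 * (real k / 200)\<^sup>2 / (6 * real k)" using kpos by (simp add: power2_eq_square field_simps)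
    also have "\<dots> \<le> 2 * \<epsilon>\<^sup>2 / (6 * real k)" using e2 kpos by (intro divide_right_mono) auto
    also have "\<dots> \<le> 2 * \<epsilon>\<^sup>2 / (36 * real m)" using mr mpos by (intro divide_left_mono) auto
    finally show ?thesis unfolding s by simp
  qed
  finally show ?thesis .
qed

end

lemma bad_bound:
  fixes V T Y :: "nat \<Rightarrow> 'a \<Rightarrow> nat" and X :: "nat + nat + nat \<Rightarrow> 'a \<Rightarrow> nat"
  assumes P: "prob_space M"
    and ind: "prob_space.indep_vars M (\<lambda>_. count_space UNIV) X I"
    and XV: "\<And>j. X (Inl j) = V j" and XT: "\<And>j. X (Inr (Inl j)) = T j" and XY: "\<And>j. X (Inr (Inr j)) = Y j"
    and Idef: "I = Inl ` {1..} \<union> Inr ` Inl ` {3..} \<union> Inr ` Inr ` {1..}"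
    and halfV: "\<And>j b. j \<ge> 1 \<Longrightarrow> b \<in> {0,1} \<Longrightarrow> measure M {\<omega> \<in> space M. V j \<omega> = b} = 1/2"
    and halfY: "\<And>j b. j \<ge> 1 \<Longrightarrow> b \<in> {0,1} \<Longrightarrow> measure M {\<omega> \<in> space M. Y j \<omega> = b} = 1/2"
    and Tnull: "\<And>j. 3 \<le> j \<Longrightarrow> j \<le> k \<Longrightarrow> measure M {\<omega> \<in> space M. T j \<omega> > k} = 0"
    and k: "k \<ge> 400"
  shows "measure M {\<omega> \<in> space M. real (lcs_len (bitdrop (\<lambda>j. V j \<omega>) (\<lambda>j. T j \<omega>) k) (map (\<lambda>i. Y i \<omega>) [1..<k+1])) < 0.65 * real k}
           \<le> exp (- real k / 120000)"
proof -
  interpret prob_space M by (rule P)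
  define tjs :: "(nat + nat + nat) list" where "tjs = map (\<lambda>j. Inr (Inl j)) [3..<k+1]"
  define wjs :: "(nat + nat + nat) list" where "wjs = map Inl [1..<k+1] @ map (\<lambda>j. Inr (Inr j)) [1..<k+1]"
  define Tl where "Tl \<omega> = map (\<lambda>j. X j \<omega>) tjs" for \<omega>
  define W where "W \<omega> = map (\<lambda>j. X j \<omega>) wjs" for \<omega>
  define perm where "perm t = bitdrop id (\<lambda>j. (t::nat list) ! (j - 3)) k" for t
  define c where "c = 0.65 * real k"
  define B where "B t = {w::nat list. real (lcs_len (map (\<lambda>j. w ! (j - 1)) (perm t)) (drop k w)) < c}" for t
  define FT where "FT = {t::nat list. set t \<subseteq> {..k} \<and> length t = k - 2}"
  define E where "E = {\<omega> \<in> space M. real (lcs_len (bitdrop (\<lambda>j. V j \<omega>) (\<lambda>j. T j \<omega>) k) (map (\<lambda>i. Y i \<omega>) [1..<k+1])) < c}"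
  define \<beta> where "\<beta> = exp (- real k / 120000)"
  have rv: "X j \<in> measurable M (count_space UNIV)" if "j \<in> I" for j
    using ind that unfolding indep_vars_def2 by auto
  have tjsI: "set tjs \<subseteq> I" and wjsI: "set wjs \<subseteq> I" unfolding tjs_def wjs_def Idef by auto
  have Tlm: "Tl \<in> measurable M (count_space UNIV)"
    unfolding Tl_def by (rule measurable_map_list) (use rv tjsI in auto)
  have Wm: "W \<in> measurable M (count_space UNIV)"
    unfolding W_def by (rule measurable_map_list) (use rv wjsI in auto)
  have Tl_eq: "Tl \<omega> = map (\<lambda>j. T j \<omega>) [3..<k+1]" for \<omega>
    unfolding Tl_def tjs_def by (simp add: XT)
  have Tl_nth: "Tl \<omega> ! (j - 3) = T j \<omega>" if "3 \<le> j" "j \<le> k" for j \<omega>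
  proof -
    have "[3..<k+1] ! (j - 3) = 3 + (j - 3)" using that by (intro nth_upt) simp
    then show ?thesis using that unfolding Tl_eq by (simp del: upt_Suc)
  qed
  have perm_props: "distinct (perm t) \<and> set (perm t) = {1..k}" for t
    unfolding perm_def by (rule bitdrop_props)
  have perm_len: "length (perm t) = k" for t
    using perm_props[of t] distinct_card[of "perm t"] by simp
  have Z_eq: "bitdrop (\<lambda>j. V j \<omega>) (\<lambda>j. T j \<omega>) k = map (\<lambda>j. V j \<omega>) (perm (Tl \<omega>))" for \<omega>
  proof -
    have "bitdrop (\<lambda>j. V j \<omega>) (\<lambda>j. T j \<omega>) k = bitdrop (\<lambda>j. V j \<omega>) (\<lambda>j. Tl \<omega> ! (j - 3)) k"
      by (rule bitdrop_cong) (simp add: Tl_nth)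
    then show ?thesis unfolding perm_def by (simp add: bitdrop_map[of "\<lambda>j. V j \<omega>"])
  qed
  have W_V: "map (\<lambda>j. W \<omega> ! (j - 1)) (perm t) = map (\<lambda>j. V j \<omega>) (perm t)" for \<omega> t
  proof (rule map_cong[OF refl])
    fix j assume "j \<in> set (perm t)"
    then have j: "1 \<le> j" "j \<le> k" using perm_props[of t] by auto
    then have "j - 1 < length (map Inl [1..<k+1] :: (nat + nat + nat) list)" by (simp del: upt_Suc)
    then have "wjs ! (j - 1) = Inl ([1..<k+1] ! (j - 1))" unfolding wjs_def by (simp add: nth_append del: upt_Suc)
    also have "[1..<k+1] ! (j - 1) = j" using j by (simp del: upt_Suc)
    finally have "wjs ! (j - 1) = Inl j" .
    moreover have "j - 1 < length wjs" using j unfolding wjs_def by (simp del: upt_Suc)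
    ultimately show "W \<omega> ! (j - 1) = V j \<omega>" unfolding W_def by (simp add: XV del: upt_Suc)
  qed
  have W_Y: "drop k (W \<omega>) = map (\<lambda>i. Y i \<omega>) [1..<k+1]" for \<omega>
    unfolding W_def wjs_def by (simp add: XY del: upt_Suc)
  have EB: "E \<inter> {\<omega> \<in> space M. Tl \<omega> = t} = {\<omega> \<in> space M. Tl \<omega> = t} \<inter> {\<omega> \<in> space M. W \<omega> \<in> B t}" for t
  proof -
    have key: "(W \<omega> \<in> B t) = (real (lcs_len (bitdrop (\<lambda>j. V j \<omega>) (\<lambda>j. T j \<omega>) k) (map (\<lambda>i. Y i \<omega>) [1..<k+1])) < c)"
      if "Tl \<omega> = t" for \<omega>
      unfolding B_def mem_Collect_eq W_V W_Y Z_eq that ..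
    show ?thesis unfolding E_def using key by auto
  qed
  have indTW: "prob ({\<omega> \<in> space M. Tl \<omega> = t} \<inter> {\<omega> \<in> space M. W \<omega> \<in> B t}) =
               prob {\<omega> \<in> space M. Tl \<omega> = t} * prob {\<omega> \<in> space M. W \<omega> \<in> B t}" for t
  proof -
    define js where "js b = (if b then tjs else wjs)" for b
    have "indep_vars (\<lambda>_. count_space UNIV) (\<lambda>b \<omega>. map (\<lambda>j. X j \<omega>) (js b)) (UNIV :: bool set)"
    proof (rule indep_vars_lists[OF ind])
      show "set (js b) \<subseteq> I" for b using tjsI wjsI by (simp add: js_def)
      show "disjoint_family_on (\<lambda>b. set (js b)) UNIV"
        unfolding disjoint_family_on_def js_def tjs_def wjs_def by auto
    qed
    then have iss: "indep_sets (\<lambda>b. {(\<lambda>\<omega>. map (\<lambda>j. X j \<omega>) (js b)) -` A \<inter> space M | A. A \<in> sets (count_space UNIV)}) (UNIV :: bool set)"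
      unfolding indep_vars_def2 by auto
    define A where "A b = (if b then Tl -` {t} \<inter> space M else W -` B t \<inter> space M)" for b
    have "prob (\<Inter>b\<in>UNIV. A b) = (\<Prod>b\<in>UNIV. prob (A b))"
    proof (rule indep_setsD[OF iss])
      show "\<forall>b\<in>UNIV. A b \<in> {(\<lambda>\<omega>. map (\<lambda>j. X j \<omega>) (js b)) -` A \<inter> space M | A. A \<in> sets (count_space UNIV)}"
        unfolding A_def js_def Tl_def W_def by auto
    qed auto
    moreover have "(\<Inter>b\<in>UNIV. A b) = {\<omega> \<in> space M. Tl \<omega> = t} \<inter> {\<omega> \<in> space M. W \<omega> \<in> B t}"
      unfolding A_def UNIV_bool by auto
    moreover have "(\<Prod>b\<in>UNIV. prob (A b)) = prob {\<omega> \<in> space M. Tl \<omega> = t} * prob {\<omega> \<in> space M. W \<omega> \<in> B t}"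
    proof -
      have "Tl -` {t} \<inter> space M = {\<omega> \<in> space M. Tl \<omega> = t}" "W -` B t \<inter> space M = {\<omega> \<in> space M. W \<omega> \<in> B t}" by auto
      then show ?thesis unfolding A_def UNIV_bool by simp
    qed
    ultimately show ?thesis by simp
  qed
  have hoeff: "prob {\<omega> \<in> space M. W \<omega> \<in> B t} \<le> \<beta>" for t
  proof -
    define ps :: "(nat + nat + nat) list" where "ps = map Inl (perm t)"
    define qs :: "(nat + nat + nat) list" where "qs = map (\<lambda>j. Inr (Inr j)) [1..<k+1]"
    have "{\<omega> \<in> space M. W \<omega> \<in> B t} = {\<omega> \<in> space M. real (lcs_len (map (\<lambda>j. X j \<omega>) ps) (map (\<lambda>j. X j \<omega>) qs)) < 0.65 * real k}"
      unfolding B_def mem_Collect_eq W_V W_Y ps_def qs_def c_def by (simp add: XV XY comp_def)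
    also have "prob \<dots> \<le> \<beta>" unfolding \<beta>_def
    proof (rule lcs_hoeffding[OF ind])
      show "distinct ps" "length ps = k" unfolding ps_def using perm_props[of t] perm_len[of t] by (auto simp: distinct_map)
      show "set ps \<subseteq> I" unfolding ps_def Idef using perm_props[of t] by auto
      show "distinct qs" "set qs \<subseteq> I" "length qs = k" unfolding qs_def Idef by (auto simp: distinct_map inj_on_def)
      show "set ps \<inter> set qs = {}" unfolding ps_def qs_def by auto
      show "400 \<le> k" by (rule k)
    next
      fix j b assume j: "j \<in> set ps \<union> set qs" and b: "b \<in> {0::nat,1}"
      show "prob {\<omega> \<in> space M. X j \<omega> = b} = 1/2"
      proof (cases "j \<in> set ps")
        case True
        then obtain a where "j = Inl a" "a \<in> {1..k}" unfolding ps_def using perm_props[of t] by auto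
        then show ?thesis using halfV[of a b] b by (simp add: XV)
      next
        case False
        then obtain a where "j = Inr (Inr a)" "a \<in> {1..k}" using j unfolding qs_def by auto
        then show ?thesis using halfY[of a b] b by (simp add: XY)
      qed
    qed
    finally show ?thesis .
  qed
  have Tnot: "prob {\<omega> \<in> space M. Tl \<omega> \<notin> FT} = 0"
  proof -
    have Tj: "T j \<in> measurable M (count_space UNIV)" if "3 \<le> j" for j
      using rv[of "Inr (Inl j)"] that unfolding Idef by (simp add: XT)
    have "{\<omega> \<in> space M. Tl \<omega> \<notin> FT} \<subseteq> (\<Union>j\<in>{3..k}. {\<omega> \<in> space M. T j \<omega> > k})"
      unfolding FT_def Tl_eq by (auto simp del: upt_Suc simp: less_Suc_eq_le not_less)
    then have "prob {\<omega> \<in> space M. Tl \<omega> \<notin> FT} \<le> prob (\<Union>j\<in>{3..k}. {\<omega> \<in> space M. T j \<omega> > k})"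
      by (rule finite_measure_mono) (use Tj sets_count_pred in auto)
    also have "\<dots> \<le> (\<Sum>j\<in>{3..k}. prob {\<omega> \<in> space M. T j \<omega> > k})"
      by (rule finite_measure_subadditive_finite) (use Tj sets_count_pred in auto)
    also have "\<dots> = 0" using Tnull by simp
    finally show ?thesis using measure_nonneg[of M] by (simp add: antisym)
  qed
  have finFT: "finite FT" unfolding FT_def by (rule finite_lists_length_eq) simp
  have evT: "{\<omega> \<in> space M. Tl \<omega> = t} \<in> events" for t by (rule sets_count_pred[OF Tlm])
  have evW: "{\<omega> \<in> space M. W \<omega> \<in> S} \<in> events" for S by (rule sets_count_pred[OF Wm])
  have "E \<subseteq> {\<omega> \<in> space M. Tl \<omega> \<notin> FT} \<union> (\<Union>t\<in>FT. E \<inter> {\<omega> \<in> space M. Tl \<omega> = t})"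
    unfolding E_def by auto
  also have "\<dots> = {\<omega> \<in> space M. Tl \<omega> \<notin> FT} \<union> (\<Union>t\<in>FT. {\<omega> \<in> space M. Tl \<omega> = t} \<inter> {\<omega> \<in> space M. W \<omega> \<in> B t})"
    using EB by simp
  finally have Esub: "E \<subseteq> \<dots>" .
  have ev1: "{\<omega> \<in> space M. Tl \<omega> \<notin> FT} \<in> events" by (rule sets_count_pred[OF Tlm])
  have ev2: "(\<Union>t\<in>FT. {\<omega> \<in> space M. Tl \<omega> = t} \<inter> {\<omega> \<in> space M. W \<omega> \<in> B t}) \<in> events"
    by (intro sets.finite_UN finFT ballI sets.Int evT evW)
  have "prob E \<le> prob ({\<omega> \<in> space M. Tl \<omega> \<notin> FT} \<union> (\<Union>t\<in>FT. {\<omega> \<in> space M. Tl \<omega> = t} \<inter> {\<omega> \<in> space M. W \<omega> \<in> B t}))"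
    by (rule finite_measure_mono[OF Esub]) (intro sets.Un ev1 ev2)
  also have "\<dots> \<le> prob {\<omega> \<in> space M. Tl \<omega> \<notin> FT} + prob (\<Union>t\<in>FT. {\<omega> \<in> space M. Tl \<omega> = t} \<inter> {\<omega> \<in> space M. W \<omega> \<in> B t})"
    by (rule measure_Un_le[OF ev1 ev2])
  also have "\<dots> \<le> 0 + (\<Sum>t\<in>FT. prob ({\<omega> \<in> space M. Tl \<omega> = t} \<inter> {\<omega> \<in> space M. W \<omega> \<in> B t}))"
    unfolding Tnot by (intro add_mono order.refl finite_measure_subadditive_finite finFT image_subsetI sets.Int evT evW)
  also have "\<dots> = (\<Sum>t\<in>FT. prob {\<omega> \<in> space M. Tl \<omega> = t} * prob {\<omega> \<in> space M. W \<omega> \<in> B t})"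
    by (simp add: indTW)
  also have "\<dots> \<le> (\<Sum>t\<in>FT. prob {\<omega> \<in> space M. Tl \<omega> = t} * \<beta>)"
    by (intro sum_mono mult_left_mono hoeff) auto
  also have "\<dots> = prob (\<Union>t\<in>FT. {\<omega> \<in> space M. Tl \<omega> = t}) * \<beta>"
    by (subst measure_finite_Union[OF finFT]) (auto simp: sum_distrib_right disjoint_family_on_def intro!: evT)
  also have "\<dots> \<le> 1 * \<beta>"
    by (intro mult_right_mono) (auto simp: \<beta>_def)
  finally show ?thesis unfolding E_def c_def \<beta>_def by simp
qed

lemma bitdrop_cong2:
  assumes "\<And>j. 1 \<le> j \<Longrightarrow> j \<le> k \<Longrightarrow> V j = V' j" "\<And>j. 3 \<le> j \<Longrightarrow> j \<le> k \<Longrightarrow> T j = T' j"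
  shows "bitdrop V T k = bitdrop V' T' k"
proof -
  have "bitdrop V T k = bitdrop V T' k" by (rule bitdrop_cong) (use assms(2) in auto)
  also have "\<dots> = map V (bitdrop id T' k)" by (rule bitdrop_map)
  also have "\<dots> = map V' (bitdrop id T' k)"
    using bitdrop_props[of T' k] assms(1) by (intro map_cong) auto
  also have "\<dots> = bitdrop V' T' k" by (rule bitdrop_map[symmetric])
  finally show ?thesis .
qed

lemma measurable_pair_count:
  assumes "f \<in> measurable M (count_space UNIV)" "g \<in> measurable M (count_space UNIV)"
  shows "(\<lambda>\<omega>. (f \<omega> :: 'b :: countable, g \<omega> :: 'c :: countable)) \<in> measurable M (count_space UNIV)"
proof -
  have "(\<lambda>\<omega>. (f \<omega>, g \<omega>)) \<in> measurable M (count_space UNIV \<Otimes>\<^sub>M count_space UNIV)"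
    using assms by (rule measurable_Pair)
  then show ?thesis by (simp add: pair_measure_countable)
qed

lemma events_bitdrop:
  fixes V T Y :: "nat \<Rightarrow> 'a \<Rightarrow> nat"
  assumes rv_V: "\<And>k. k \<ge> 1 \<Longrightarrow> V k \<in> measurable M (count_space UNIV)"
    and rv_T: "\<And>k. k \<ge> 3 \<Longrightarrow> T k \<in> measurable M (count_space UNIV)"
    and rv_Y: "\<And>i. i \<ge> 1 \<Longrightarrow> Y i \<in> measurable M (count_space UNIV)"
  shows "{\<omega> \<in> space M. R (\<lambda>k. if k \<le> n then bitdrop (\<lambda>j. V j \<omega>) (\<lambda>j. T j \<omega>) k else []) (map (\<lambda>i. Y i \<omega>) [1..<n+1])} \<in> sets M"
proof -
  define LV where "LV \<omega> = map (\<lambda>j. V j \<omega>) [1..<n+1]" for \<omega>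
  define LT where "LT \<omega> = map (\<lambda>j. T j \<omega>) [3..<n+1]" for \<omega>
  define LY where "LY \<omega> = map (\<lambda>j. Y j \<omega>) [1..<n+1]" for \<omega>
  have m: "(\<lambda>\<omega>. (LV \<omega>, LT \<omega>, LY \<omega>)) \<in> measurable M (count_space UNIV)"
    unfolding LV_def LT_def LY_def
    by (intro measurable_pair_count measurable_map_list) (use rv_V rv_T rv_Y in auto)
  have eq: "(\<lambda>k. if k \<le> n then bitdrop (\<lambda>j. V j \<omega>) (\<lambda>j. T j \<omega>) k else []) =
            (\<lambda>k. if k \<le> n then bitdrop (\<lambda>j. LV \<omega> ! (j - 1)) (\<lambda>j. LT \<omega> ! (j - 3)) k else [])" for \<omega>
  proof (rule ext)
    fix k
    show "(if k \<le> n then bitdrop (\<lambda>j. V j \<omega>) (\<lambda>j. T j \<omega>) k else []) =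
          (if k \<le> n then bitdrop (\<lambda>j. LV \<omega> ! (j - 1)) (\<lambda>j. LT \<omega> ! (j - 3)) k else [])"
    proof (cases "k \<le> n")
      case True
      have "bitdrop (\<lambda>j. V j \<omega>) (\<lambda>j. T j \<omega>) k = bitdrop (\<lambda>j. LV \<omega> ! (j - 1)) (\<lambda>j. LT \<omega> ! (j - 3)) k"
      proof (rule bitdrop_cong2)
        fix j assume j: "1 \<le> j" "j \<le> k"
        have "[1..<n+1] ! (j - 1) = 1 + (j - 1)" using j True by (intro nth_upt) simp
        then show "V j \<omega> = LV \<omega> ! (j - 1)" unfolding LV_def using j True by (simp del: upt_Suc)
      next
        fix j assume j: "3 \<le> j" "j \<le> k"
        have "[3..<n+1] ! (j - 3) = 3 + (j - 3)" using j True by (intro nth_upt) simp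
        then show "T j \<omega> = LT \<omega> ! (j - 3)" unfolding LT_def using j True by (simp del: upt_Suc)
      qed
      then show ?thesis by simp
    qed simp
  qed
  have "{\<omega> \<in> space M. R (\<lambda>k. if k \<le> n then bitdrop (\<lambda>j. V j \<omega>) (\<lambda>j. T j \<omega>) k else []) (map (\<lambda>i. Y i \<omega>) [1..<n+1])}
      = {\<omega> \<in> space M. (\<lambda>(a,b,c). R (\<lambda>k. if k \<le> n then bitdrop (\<lambda>j. a ! (j - 1)) (\<lambda>j. b ! (j - 3)) k else []) c) (LV \<omega>, LT \<omega>, LY \<omega>)}"
    by (simp add: eq LY_def)
  also have "\<dots> \<in> sets M" by (rule sets_count_pred[OF m])
  finally show ?thesis .
qed

theorem lemma8:
  fixes M :: "'a measure"
    and V :: "nat \<Rightarrow> 'a \<Rightarrow> nat"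
    and T :: "nat \<Rightarrow> 'a \<Rightarrow> nat"
    and Y :: "nat \<Rightarrow> 'a \<Rightarrow> nat"
  assumes "prob_space M"
    and rv_V: "\<And>k. k \<ge> 1 \<Longrightarrow> V k \<in> measurable M (count_space UNIV)"
    and rv_T: "\<And>k. k \<ge> 3 \<Longrightarrow> T k \<in> measurable M (count_space UNIV)"
    and rv_Y: "\<And>i. i \<ge> 1 \<Longrightarrow> Y i \<in> measurable M (count_space UNIV)"
    and distr_V: "\<And>k. k \<ge> 1 \<Longrightarrow>
        distr M (count_space UNIV) (V k) = measure_pmf (pmf_of_set {0, 1})"
    and distr_T: "\<And>k. k \<ge> 3 \<Longrightarrow>
        distr M (count_space UNIV) (T k) = measure_pmf (pmf_of_set {2..k - 1})"
    and distr_Y: "\<And>i. i \<ge> 1 \<Longrightarrow>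
        distr M (count_space UNIV) (Y i) = measure_pmf (pmf_of_set {0, 1})"
    and indep: "prob_space.indep_vars M (\<lambda>_. count_space UNIV)
        (\<lambda>j. case j of Inl k \<Rightarrow> V k | Inr (Inl k) \<Rightarrow> T k | Inr (Inr i) \<Rightarrow> Y i)
        (Inl ` {1..} \<union> Inr ` Inl ` {3..} \<union> Inr ` Inr ` {1..})"
  shows "(\<lambda>n. measure M
            {\<omega> \<in> space M. \<forall>k \<in> {nat \<lceil>0.45 * real n\<rceil>..n}.
               real (lcs_len (bitdrop (\<lambda>j. V j \<omega>) (\<lambda>j. T j \<omega>) k)
                             (map (\<lambda>i. Y i \<omega>) [1..<n + 1]))
               \<ge> 0.65 * real k})
         \<longlonglongrightarrow> 1"
proof -
  interpret prob_space M by fact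
  define X :: "nat + nat + nat \<Rightarrow> 'a \<Rightarrow> nat" where
    "X = (\<lambda>j. case j of Inl k \<Rightarrow> V k | Inr (Inl k) \<Rightarrow> T k | Inr (Inr i) \<Rightarrow> Y i)"
  define I :: "(nat + nat + nat) set" where "I = Inl ` {1..} \<union> Inr ` Inl ` {3..} \<union> Inr ` Inr ` {1..}"
  have ind: "indep_vars (\<lambda>_. count_space UNIV) X I" using indep unfolding X_def I_def .
  have prob_distr: "prob {\<omega> \<in> space M. f \<omega> \<in> S} = measure (distr M (count_space UNIV) f) S"
    if "f \<in> measurable M (count_space UNIV)" for f :: "'a \<Rightarrow> nat" and S
  proof -
    have "measure (distr M (count_space UNIV) f) S = prob (f -` S \<inter> space M)"
      by (rule measure_distr[OF that]) simp
    moreover have "f -` S \<inter> space M = {\<omega> \<in> space M. f \<omega> \<in> S}" by auto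
    ultimately show ?thesis by simp
  qed
  have half_pmf: "measure (measure_pmf (pmf_of_set {0::nat,1})) {b} = 1/2" if "b \<in> {0,1}" for b
    using that by (simp add: measure_pmf_single)
  have halfV: "prob {\<omega> \<in> space M. V j \<omega> = b} = 1/2" if "j \<ge> 1" "b \<in> {0,1}" for j b
    using prob_distr[OF rv_V[OF that(1)], of "{b}"] distr_V[OF that(1)] half_pmf[OF that(2)] by simp
  have halfY: "prob {\<omega> \<in> space M. Y j \<omega> = b} = 1/2" if "j \<ge> 1" "b \<in> {0,1}" for j b
    using prob_distr[OF rv_Y[OF that(1)], of "{b}"] distr_Y[OF that(1)] half_pmf[OF that(2)] by simp
  have Tnull: "prob {\<omega> \<in> space M. T j \<omega> > k} = 0" if "3 \<le> j" "j \<le> k" for j k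
  proof -
    have "prob {\<omega> \<in> space M. T j \<omega> > k} = prob {\<omega> \<in> space M. T j \<omega> \<in> {k<..}}" by simp
    also have "\<dots> = measure (measure_pmf (pmf_of_set {2..j - 1})) {k<..}"
      using prob_distr[OF rv_T[OF that(1)], of "{k<..}"] distr_T[OF that(1)] by simp
    also have "\<dots> = 0"
      using that by (subst measure_pmf_zero_iff) (auto simp: set_pmf_of_set)
    finally show ?thesis .
  qed
  have bad: "prob {\<omega> \<in> space M. real (lcs_len (bitdrop (\<lambda>j. V j \<omega>) (\<lambda>j. T j \<omega>) k) (map (\<lambda>i. Y i \<omega>) [1..<k+1])) < 0.65 * real k}
           \<le> exp (- real k / 120000)" if "k \<ge> 400" for k
    by (rule bad_bound[OF \<open>prob_space M\<close> ind _ _ _ I_def halfV halfY Tnull that]) (simp_all add: X_def)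
  define f where "f n = 1 - (real n + 1) * exp (- (0.45 * real n) / 120000)" for n :: nat
  define g where "g n = measure M
            {\<omega> \<in> space M. \<forall>k \<in> {nat \<lceil>0.45 * real n\<rceil>..n}.
               real (lcs_len (bitdrop (\<lambda>j. V j \<omega>) (\<lambda>j. T j \<omega>) k)
                             (map (\<lambda>i. Y i \<omega>) [1..<n + 1]))
               \<ge> 0.65 * real k}" for n
  have flim: "f \<longlonglongrightarrow> 1" unfolding f_def by real_asymp
  have gle: "g n \<le> 1" for n unfolding g_def by simp
  have gge: "f n \<le> g n" if n: "n \<ge> 889" for n
  proof -
    define K where "K = {nat \<lceil>0.45 * real n\<rceil>..n}"
    define Ev where "Ev = {\<omega> \<in> space M. \<forall>k \<in> K.
               real (lcs_len (bitdrop (\<lambda>j. V j \<omega>) (\<lambda>j. T j \<omega>) k)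
                             (map (\<lambda>i. Y i \<omega>) [1..<n + 1])) \<ge> 0.65 * real k}"
    define bd where "bd k = {\<omega> \<in> space M. real (lcs_len (bitdrop (\<lambda>j. V j \<omega>) (\<lambda>j. T j \<omega>) k) (map (\<lambda>i. Y i \<omega>) [1..<k+1])) < 0.65 * real k}" for k
    have Kge: "real k \<ge> 0.45 * real n" if "k \<in> K" for k
    proof -
      have "real (nat \<lceil>0.45 * real n\<rceil>) \<ge> 0.45 * real n" by linarith
      then show ?thesis using that unfolding K_def by auto
    qed
    have K400: "k \<ge> 400" if "k \<in> K" for k
    proof -
      have "0.45 * real n \<ge> 400" using n by simp
      then show ?thesis using Kge[OF that] by linarith
    qed
    have evEv: "Ev \<in> events"
    proof -
      have "Ev = {\<omega> \<in> space M. (\<lambda>zs ys. \<forall>k\<in>K. real (lcs_len (zs k) ys) \<ge> 0.65 * real k)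
                (\<lambda>k. if k \<le> n then bitdrop (\<lambda>j. V j \<omega>) (\<lambda>j. T j \<omega>) k else []) (map (\<lambda>i. Y i \<omega>) [1..<n+1])}"
        unfolding Ev_def K_def by auto
      also have "\<dots> \<in> events" by (rule events_bitdrop[OF rv_V rv_T rv_Y])
      finally show ?thesis .
    qed
    have evbd: "bd k \<in> events" for k
    proof -
      have "bd k = {\<omega> \<in> space M. (\<lambda>zs ys. real (lcs_len (zs k) ys) < 0.65 * real k)
                (\<lambda>k'. if k' \<le> k then bitdrop (\<lambda>j. V j \<omega>) (\<lambda>j. T j \<omega>) k' else []) (map (\<lambda>i. Y i \<omega>) [1..<k+1])}"
        unfolding bd_def by auto
      also have "\<dots> \<in> events" by (rule events_bitdrop[OF rv_V rv_T rv_Y])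
      finally show ?thesis .
    qed
    have finK: "finite K" unfolding K_def by simp
    have sub: "space M - Ev \<subseteq> (\<Union>k\<in>K. bd k)"
    proof
      fix \<omega> assume "\<omega> \<in> space M - Ev"
      then obtain k where \<omega>: "\<omega> \<in> space M" and k: "k \<in> K"
        and lt: "real (lcs_len (bitdrop (\<lambda>j. V j \<omega>) (\<lambda>j. T j \<omega>) k) (map (\<lambda>i. Y i \<omega>) [1..<n + 1])) < 0.65 * real k"
        unfolding Ev_def by auto
      have kn: "k \<le> n" using k unfolding K_def by simp
      have "[1..<(k+1) + (n-k)] = [1..<k+1] @ [k+1..<(k+1) + (n-k)]" by (rule upt_add_eq_append) simp
      then have "[1..<n+1] = [1..<k+1] @ [k+1..<n+1]" using kn by (simp del: upt_Suc)
      then have "subseq (map (\<lambda>i. Y i \<omega>) [1..<k+1]) (map (\<lambda>i. Y i \<omega>) [1..<n+1])"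
        by (metis map_append prefixI prefix_imp_subseq)
      then have "lcs_len (bitdrop (\<lambda>j. V j \<omega>) (\<lambda>j. T j \<omega>) k) (map (\<lambda>i. Y i \<omega>) [1..<k+1])
                 \<le> lcs_len (bitdrop (\<lambda>j. V j \<omega>) (\<lambda>j. T j \<omega>) k) (map (\<lambda>i. Y i \<omega>) [1..<n+1])"
        by (rule lcs_mono2)
      then have "real (lcs_len (bitdrop (\<lambda>j. V j \<omega>) (\<lambda>j. T j \<omega>) k) (map (\<lambda>i. Y i \<omega>) [1..<k+1]))
                 \<le> real (lcs_len (bitdrop (\<lambda>j. V j \<omega>) (\<lambda>j. T j \<omega>) k) (map (\<lambda>i. Y i \<omega>) [1..<n+1]))"
        by (simp only: of_nat_le_iff)
      then have "real (lcs_len (bitdrop (\<lambda>j. V j \<omega>) (\<lambda>j. T j \<omega>) k) (map (\<lambda>i. Y i \<omega>) [1..<k+1])) < 0.65 * real k"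
        using lt by linarith
      then have "\<omega> \<in> bd k" unfolding bd_def using \<omega> by blast
      then show "\<omega> \<in> (\<Union>k\<in>K. bd k)" using k by blast
    qed
    have "prob (space M - Ev) \<le> prob (\<Union>k\<in>K. bd k)"
      by (rule finite_measure_mono[OF sub]) (intro sets.finite_UN finK ballI evbd)
    also have "\<dots> \<le> (\<Sum>k\<in>K. prob (bd k))"
      by (rule finite_measure_subadditive_finite[OF finK]) (auto intro: evbd)
    also have "\<dots> \<le> (\<Sum>k\<in>K. exp (- (0.45 * real n) / 120000))"
    proof (rule sum_mono)
      fix k assume k: "k \<in> K"
      have "prob (bd k) \<le> exp (- real k / 120000)" unfolding bd_def by (rule bad[OF K400[OF k]])
      also have "\<dots> \<le> exp (- (0.45 * real n) / 120000)" using Kge[OF k] by simp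
      finally show "prob (bd k) \<le> exp (- (0.45 * real n) / 120000)" .
    qed
    also have "\<dots> = real (card K) * exp (- (0.45 * real n) / 120000)" by simp
    also have "\<dots> \<le> (real n + 1) * exp (- (0.45 * real n) / 120000)"
    proof (intro mult_right_mono)
      have "card K \<le> card {0..n}" unfolding K_def by (intro card_mono) auto
      then show "real (card K) \<le> real n + 1" by simp
    qed simp
    finally have "prob (space M - Ev) \<le> (real n + 1) * exp (- (0.45 * real n) / 120000)" .
    moreover have "prob (space M - Ev) = 1 - prob Ev" by (rule prob_compl[OF evEv])
    ultimately show ?thesis unfolding f_def g_def Ev_def K_def by simp
  qed
  have "g \<longlonglongrightarrow> 1"
  proof (rule tendsto_sandwich[OF _ _ flim tendsto_const])
    show "eventually (\<lambda>n. f n \<le> g n) sequentially"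
      using gge by (auto simp: eventually_sequentially)
    show "eventually (\<lambda>n. g n \<le> 1) sequentially" using gle by simp
  qed
  then show ?thesis unfolding g_def .
qed

end
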